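(* Assume the setting, the majorant assumptions and the constants described in the context. Let $x_0\in C\cap B(x_*,\sigma)\setminus\{x_*\}$ and $\{\theta_k\}\subset[0,\lambda^2/2]$. Let $\{M_k\}$, $\{(s_k,r_k,y_k)\}$ and $\{x_k\}$ be generated by the INL-CondG method started at $x_0$ with parameters $\{\theta_k\}$ (assume the method does not stop, i.e. $F(x_k)\neq 0$ for all $k$). Assume that for all $k\ge 0$ $$\|M_k^{-1}F'(x_k)\|\le \omega_1,\qquad \|M_k^{-1}F'(x_k)-I\|\le\omega_2,$$ and that there are invertible matrices $P_k$ and scalars $\eta_k$ with $$\|P_kr_k\|\le \eta_k\|P_kF(x_k)\|,\qquad 0\le \eta_k\,\mathrm{cond}(P_kF'(x_k))\le\vartheta .$$ Then $\{x_k\}\subset B(x_*,\sigma)\cap C$, $x_k\to x_*$, and $$\|x_{k+1}-x_*\|<\|x_k-x_*\|\ \ (k\ge0),\qquad \limsup_{k\to\infty}\frac{\|x_{k+1}-x_*\|}{\|x_k-x_*\|}\le \omega_1\big[(1+\vartheta)\sqrt{2\tilde\theta}+\vartheta\big]+\omega_2,$$ where $\tilde\theta=\limsup_{k\to\infty}\theta_k$. Moreover, if additionally for some $0<p\le1$ the following condition holds: (h3) the function $(0,\nu)\ni t\mapsto [f(t)/f'(t)-t]/t^{p+1}$ is strictly increasing, then for every integer $k\ge0$ $$\|x_{k+1}-x_*\|\le \omega_1(1+\vartheta)(1+\lambda)\Big(\frac{f(\|x_0-x_*\|)}{f'(\|x_0-x_*\|)}-\|x_0-x_*\|\Big)\B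ig(\frac{\|x_k-x_*\|}{\|x_0-x_*\|}\Big)^{p+1}+\big(\omega_1[(1+\vartheta)\lambda+\vartheta]+\omega_2\big)\|x_k-x_*\|.$$
   Context: Setting: $\Omega\subset\mathbb{R}^n$ is open, $F:\Omega\to\mathbb{R}^n$ is continuously differentiable with Jacobian $F'(x)$, $C\subset\Omega$ is a nonempty convex compact set, and $x_*\in C$ satisfies $F(x_* )=0$ with $F'(x_* )$ nonsingular. $\|\cdot\|$ is the Euclidean norm on $\mathbb{R}^n$ and the induced operator norm on matrices; $B(a,\delta)$ is the open ball of center $a$ and radius $\delta$; $\mathrm{cond}(A)=\|A^{-1}\|\|A\|$. Majorant assumptions: $R>0$, $\kappa:=\sup\{t\in[0,R): B(x_*,t)\subset\Omega\}$, and $f:[0,R)\to\mathbb{R}$ is continuously differentiable with $$\|F'(x_* )^{-1}[F'(x)-F'(x_*+\tau(x-x_* ))]\|\le f'(\|x-x_*\|)-f'(\tau\|x-x_*\|)\quad\text{for all }\tau\in[0,1],\ x\in B(x_*,\kappa),$$ (h1) $f(0)=0$, $f'(0)=-1$; (h2) $f'$ is strictly increasing. Constants: $0\le\vartheta<1$, $0\le\omega_2<\omega_1$, $\omega_1\vartheta+\omega_2<1$, $\lambda\in[0,(1-\omega_2-\omega_1\vartheta)/(\omega_1(1+\vartheta)))$; $\nu:=\sup\{t\in[0,R): f'(t)<0\}$; $\rho:=\sup\{\delta\in(0,\nu): \omega_1(1+\vartheta)(1+\lambda)\big(\tfrac{f(t)}{tf'(t)}-1\big)+\omega_1[(1+\vartheta)\lambda+\vartheta]+\omega_2<1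 \text{ for all } t\in(0,\delta)\}$; $\sigma:=\min\{\kappa,\rho\}$. CondG procedure $z=\mathrm{CondG}(y,x,\varepsilon)$ (for $y\in\mathbb{R}^n$, $x\in C$, $\varepsilon\ge0$): set $z_1=x$, $t=1$. (P1) Compute an optimal solution $u_t$ of $g_t^*=\min_{u\in C}\langle z_t-y,u-z_t\rangle$. (P2) If $g_t^*\ge-\varepsilon$, set $z=z_t$ and stop; otherwise set $\alpha_t=\min\{1,-g_t^*/\|u_t-z_t\|^2\}$, $z_{t+1}=z_t+\alpha_t(u_t-z_t)$, $t\leftarrow t+1$ and go to (P1). INL-CondG method: given $x_0\in C$ and $\{\theta_j\}\subset[0,\infty)$, for $k=0,1,\dots$: if $F(x_k)=0$ stop; otherwise choose an invertible matrix $M_k$ (approximating $F'(x_k)$) and compute $(s_k,r_k,y_k)$ with $M_ks_k=-F(x_k)+r_k$, $y_k=x_k+s_k$; then set $x_{k+1}=\mathrm{CondG}(y_k,x_k,\theta_k\|s_k\|^2)$. *)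

theory Defs
  imports "HOL-Analysis.Analysis"
begin

definition opnorm :: "real^'n^'n \<Rightarrow> real" where
  "opnorm A = onorm (\<lambda>v. A *v v)"

definition cond :: "real^'n^'n \<Rightarrow> real" where
  "cond A = opnorm (matrix_inv A) * opnorm A"

definition kappa :: "real \<Rightarrow> (real^'n) set \<Rightarrow> real^'n \<Rightarrow> real" where
  "kappa R \<Omega> xs = Sup {t. 0 \<le> t \<and> t < R \<and> ball xs t \<subseteq> \<Omega>}"

definition nu :: "real \<Rightarrow> (real \<Rightarrow> real) \<Rightarrow> real" where
  "nu R df = Sup {t. 0 \<le> t \<and> t < R \<and> df t < 0}"

definition rho :: "real \<Rightarrow> (real \<Rightarrow> real) \<Rightarrow> (real \<Rightarrow> real) \<Rightarrow> real \<Rightarrow> real \<Rightarrow> real \<Rightarrow> real \<Rightarrow> real" where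
  "rho R f df \<omega>1 \<omega>2 vth lam = Sup {\<delta>. 0 < \<delta> \<and> \<delta> < nu R df \<and>
     (\<forall>t. 0 < t \<and> t < \<delta> \<longrightarrow>
        \<omega>1 * (1 + vth) * (1 + lam) * (f t / (t * df t) - 1)
        + \<omega>1 * ((1 + vth) * lam + vth) + \<omega>2 < 1)}"

text \<open>Runs of the CondG procedure: condG C y \<epsilon> z z' means that the procedure,
  started (or currently) at iterate z with target y and tolerance \<epsilon>, stops with
  output z' (for some choice of the optimal solutions u_t in step (P1)).\<close>
inductive condG :: "(real^'n) set \<Rightarrow> real^'n \<Rightarrow> real \<Rightarrow> real^'n \<Rightarrow> real^'n \<Rightarrow> bool"
  for C y \<epsilon> where
  stop: "\<lbrakk> u \<in> C; \<forall>v\<in>C. inner (z - y) (u - z) \<le> inner (z - y) (v - z);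
          inner (z - y) (u - z) \<ge> - \<epsilon> \<rbrakk> \<Longrightarrow> condG C y \<epsilon> z z"
| step: "\<lbrakk> u \<in> C; \<forall>v\<in>C. inner (z - y) (u - z) \<le> inner (z - y) (v - z);
          inner (z - y) (u - z) < - \<epsilon>;
          condG C y \<epsilon> (z + min 1 (- inner (z - y) (u - z) / (norm (u - z))\<^sup>2) *\<^sub>R (u - z)) z' \<rbrakk>
        \<Longrightarrow> condG C y \<epsilon> z z'"

end

theory Submission
  imports Defs
begin


lemma opnorm_mv: "norm (A *v v) \<le> opnorm A * norm v"
  unfolding opnorm_def by (rule onorm) simp

lemma opnorm_nonneg: "0 \<le> opnorm A"
  unfolding opnorm_def by (rule onorm_pos_le) simp

lemma opnorm_mult: "opnorm ((A::real^'n^'n) ** B) \<le> opnorm A * opnorm B"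
proof -
  have "(\<lambda>v. (A ** B) *v v) = (\<lambda>v. A *v v) \<circ> (\<lambda>v. B *v v)"
    by (auto simp: matrix_vector_mul_assoc)
  thus ?thesis unfolding opnorm_def by (simp add: onorm_compose)
qed

lemma minv: assumes "invertible (A::real^'n^'n)"
  shows "A ** matrix_inv A = mat 1" "matrix_inv A ** A = mat 1"
proof -
  have "\<exists>A'. A ** A' = mat 1 \<and> A' ** A = mat 1" using assms invertible_def by blast
  hence "A ** matrix_inv A = mat 1 \<and> matrix_inv A ** A = mat 1"
    unfolding matrix_inv_def by (rule someI_ex)
  thus "A ** matrix_inv A = mat 1" "matrix_inv A ** A = mat 1" by auto
qed

lemma minv_mv: assumes "invertible (A::real^'n^'n)"
  shows "A *v (matrix_inv A *v v) = v" "matrix_inv A *v (A *v v) = v"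
  using minv[OF assms] by (simp_all add: matrix_vector_mul_assoc)

lemma minv_mult: assumes "invertible (A::real^'n^'n)" "invertible (B::real^'n^'n)"
  shows "matrix_inv (A ** B) = matrix_inv B ** matrix_inv A"
proof -
  have i: "invertible (A ** B)" using assms invertible_mult by blast
  define X where "X = matrix_inv B ** matrix_inv A"
  have "X ** (A ** B) = matrix_inv B ** ((matrix_inv A ** A) ** B)"
    by (simp add: X_def matrix_mul_assoc)
  also have "\<dots> = mat 1" using minv(2)[OF assms(1)] minv(2)[OF assms(2)] by simp
  finally have X1: "X ** (A ** B) = mat 1" .
  have "X = X ** ((A ** B) ** matrix_inv (A ** B))" using minv(1)[OF i] by simp
  also have "\<dots> = (X ** (A ** B)) ** matrix_inv (A ** B)" by (simp add: matrix_mul_assoc)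
  also have "\<dots> = matrix_inv (A ** B)" using X1 by simp
  finally show ?thesis unfolding X_def by simp
qed

lemma invertible_if_lower:
  assumes "\<And>w. c * norm w \<le> norm ((A::real^'n^'n) *v w)" "c > 0"
  shows "invertible A"
proof -
  have "\<forall>x. A *v x = 0 \<longrightarrow> x = 0"
  proof (intro allI impI)
    fix x assume "A *v x = 0"
    with assms(1)[of x] have "c * norm x \<le> 0" by simp
    with assms(2) show "x = 0" by (simp add: mult_le_0_iff)
  qed
  thus ?thesis using matrix_left_invertible_ker invertible_left_inverse by blast
qed




lemma condG_prop:
  assumes "condG C y \<epsilon> z z'" "convex C" "z \<in> C" "\<epsilon> \<ge> 0"
  shows "z' \<in> C \<and> (\<forall>v\<in>C. inner (z' - y) (v - z') \<ge> - \<epsilon>)"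
  using assms
proof (induction rule: condG.induct)
  case (stop u z)
  then show ?case by force
next
  case (step u z z')
  define g where "g = inner (z - y) (u - z)"
  define a where "a = min 1 (- g / (norm (u - z))\<^sup>2)"
  have g: "g < 0" using step.hyps(3) step.prems(3) g_def by linarith
  have a0: "0 \<le> a" unfolding a_def using g by (simp add: divide_nonpos_nonneg)
  have a1: "a \<le> 1" unfolding a_def by simp
  have "(1 - a) *\<^sub>R z + a *\<^sub>R u \<in> C"
    using step.prems(1,2) step.hyps(1) a0 a1 by (simp add: convexD)
  moreover have "(1 - a) *\<^sub>R z + a *\<^sub>R u = z + a *\<^sub>R (u - z)"
    by (simp add: algebra_simps)
  ultimately have "z + a *\<^sub>R (u - z) \<in> C" by simp
  thus ?case using step.IH step.prems a_def g_def by blast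
qed

lemma condG_dist:
  fixes z' y xt :: "'a::real_inner"
  assumes "\<forall>v\<in>C. inner (z' - y) (v - z') \<ge> - \<epsilon>" "xt \<in> C" "\<epsilon> \<ge> 0"
  shows "norm (z' - xt) \<le> norm (y - xt) + sqrt (2 * \<epsilon>)"
proof -
  have i: "inner (z' - y) (xt - z') \<ge> - \<epsilon>" using assms by blast
  have e: "(norm (y - xt))\<^sup>2 = (norm (y - z'))\<^sup>2 + (norm (z' - xt))\<^sup>2 + 2 * inner (z' - y) (xt - z')"
  proof -
    have "y - xt = (y - z') + (z' - xt)" by simp
    hence "(norm (y - xt))\<^sup>2 = (norm ((y - z') + (z' - xt)))\<^sup>2" by simp
    also have "\<dots> = (norm (y - z'))\<^sup>2 + (norm (z' - xt))\<^sup>2 + 2 * inner (y - z') (z' - xt)"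
      using dot_norm[of "y - z'" "z' - xt"] by simp
    also have "inner (y - z') (z' - xt) = inner (z' - y) (xt - z')"
      by (metis inner_minus_left inner_minus_right minus_diff_eq)
    finally show ?thesis .
  qed
  have "(norm (z' - xt))\<^sup>2 \<le> (norm (y - xt))\<^sup>2 + 2 * \<epsilon>"
    using e i by (smt (verit) zero_le_power2)
  also have "\<dots> \<le> (norm (y - xt) + sqrt (2 * \<epsilon>))\<^sup>2"
    using assms(3) by (simp add: power2_sum)
  finally have "(norm (z' - xt))\<^sup>2 \<le> (norm (y - xt) + sqrt (2 * \<epsilon>))\<^sup>2" .
  then show ?thesis by (rule power2_le_imp_le) (simp add: assms(3))
qed




lemma tt_le: "0 < (t::real) \<Longrightarrow> 0 \<le> \<tau> \<Longrightarrow> \<tau> \<le> 1 \<Longrightarrow> \<tau> * t \<le> t"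
  by (simp add: mult_left_le_one_le)

lemma newton_err:
  fixes F :: "real^'n \<Rightarrow> real^'n" and F' :: "real^'n \<Rightarrow> real^'n^'n"
    and f df :: "real \<Rightarrow> real"
  assumes F_deriv: "\<forall>z\<in>\<Omega>. (F has_derivative (\<lambda>h. F' z *v h)) (at z)"
    and ballK: "ball xs K \<subseteq> \<Omega>"
    and majorant: "\<forall>\<tau>\<in>{0..1}. \<forall>z\<in>ball xs K.
        opnorm (matrix_inv (F' xs) ** (F' z - F' (xs + \<tau> *\<^sub>R (z - xs))))
          \<le> df (norm (z - xs)) - df (\<tau> * norm (z - xs))"
    and F_xs: "F xs = 0" and F'_xs_inv: "invertible (F' xs)"
    and f_deriv: "\<forall>t\<in>{0..<R}. (f has_real_derivative df t) (at t within {0..<R})"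
    and h1: "f 0 = 0" "df 0 = -1"
    and h2: "strict_mono_on {0..<R} df"
    and xK: "norm (x - xs) < K" and tpos: "0 < norm (x - xs)"
    and dfneg: "df (norm (x - xs)) < 0" and tR: "norm (x - xs) < R"
  shows "invertible (F' x)"
    "\<And>v. norm (matrix_inv (F' x) *v (F' xs *v v)) \<le> norm v / (- df (norm (x - xs)))"
    "norm (matrix_inv (F' x) *v F x - (x - xs))
       \<le> f (norm (x - xs)) / df (norm (x - xs)) - norm (x - xs)"
proof -
  define t where "t = norm (x - xs)"
  define d where "d = x - xs"
  define A0 where "A0 = matrix_inv (F' xs)"
  have A0l: "A0 *v (F' xs *v v) = v" for v unfolding A0_def using minv_mv[OF F'_xs_inv] by simp
  have A0r: "F' xs *v (A0 *v v) = v" for v unfolding A0_def using minv_mv[OF F'_xs_inv] by simp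
  have xb: "x \<in> ball xs K" using xK by (simp add: dist_norm norm_minus_commute)
  have m0: "opnorm (A0 ** (F' x - F' xs)) \<le> df t + 1"
    using majorant[rule_format, of 0 x] xb h1 unfolding A0_def t_def by simp
  have low: "- df t * norm w \<le> norm (A0 *v (F' x *v w))" for w
  proof -
    have "(A0 ** (F' x - F' xs)) *v w = A0 *v (F' x *v w) - w"
      by (simp add: matrix_vector_mul_assoc[symmetric] matrix_vector_mult_diff_rdistrib
          matrix_vector_mult_diff_distrib A0l)
    hence "norm (A0 *v (F' x *v w) - w) = norm ((A0 ** (F' x - F' xs)) *v w)" by simp
    also have "\<dots> \<le> opnorm (A0 ** (F' x - F' xs)) * norm w" by (rule opnorm_mv)
    also have "\<dots> \<le> (df t + 1) * norm w" by (rule mult_right_mono[OF m0 norm_ge_zero])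
    finally have "norm (A0 *v (F' x *v w) - w) \<le> (df t + 1) * norm w" .
    hence "norm w - norm (A0 *v (F' x *v w)) \<le> (df t + 1) * norm w"
      using norm_triangle_ineq2[of w "A0 *v (F' x *v w)"] norm_minus_commute[of w "A0 *v (F' x *v w)"]
      by linarith
    thus ?thesis by (simp add: algebra_simps)
  qed
  have dft: "df t < 0" using dfneg t_def by simp
  have invA: "invertible (A0 ** F' x)"
    by (rule invertible_if_lower[where c="- df t"]) (use low dft in \<open>simp_all add: matrix_vector_mul_assoc\<close>)
  have eqF: "F' x = F' xs ** (A0 ** F' x)"
    using minv(1)[OF F'_xs_inv] unfolding A0_def by (simp add: matrix_mul_assoc)
  show invx: "invertible (F' x)" by (subst eqF) (rule invertible_mult[OF F'_xs_inv invA])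
  have bnd: "norm (matrix_inv (F' x) *v (F' xs *v v)) \<le> norm v / (- df t)" for v
  proof -
    define w where "w = matrix_inv (F' x) *v (F' xs *v v)"
    have "A0 *v (F' x *v w) = v" unfolding w_def using minv_mv[OF invx] A0l by simp
    with low[of w] have "- df t * norm w \<le> norm v" by simp
    thus ?thesis unfolding w_def using dft by (simp add: field_simps)
  qed
  thus "\<And>v. norm (matrix_inv (F' x) *v (F' xs *v v)) \<le> norm v / (- df (norm (x - xs)))"
    unfolding t_def .
  define \<Phi> where "\<Phi> = (\<lambda>\<tau>::real. A0 *v (F (xs + \<tau> *\<^sub>R d) - \<tau> *\<^sub>R (F' x *v d)))"
  define \<Phi>' where "\<Phi>' = (\<lambda>\<tau>::real. A0 *v (F' (xs + \<tau> *\<^sub>R d) *v d - F' x *v d))"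
  define \<psi> where "\<psi> = (\<lambda>\<tau>. \<tau> * t * df t - f (\<tau> * t))"
  define \<psi>' where "\<psi>' = (\<lambda>\<tau>. t * df t - df (\<tau> * t) * t)"
  have inO: "xs + \<tau> *\<^sub>R d \<in> \<Omega>" if "0 \<le> \<tau>" "\<tau> \<le> 1" for \<tau>
  proof -
    have "norm (\<tau> *\<^sub>R d) \<le> t" using that unfolding t_def d_def
      by (simp add: mult_left_le_one_le)
    hence "xs + \<tau> *\<^sub>R d \<in> ball xs K" using xK t_def by (simp add: dist_norm)
    thus ?thesis using ballK by blast
  qed
  have Phider: "(\<Phi> has_vector_derivative \<Phi>' \<tau>) (at \<tau>)" if "0 \<le> \<tau>" "\<tau> \<le> 1" for \<tau>
  proof -
    have Fd: "(F has_derivative (\<lambda>h. F' (xs + \<tau> *\<^sub>R d) *v h)) (at (xs + \<tau> *\<^sub>R d))"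
      using F_deriv inO[OF that] by blast
    have ld: "((\<lambda>\<tau>. xs + \<tau> *\<^sub>R d) has_derivative (\<lambda>h. h *\<^sub>R d)) (at \<tau>)"
      by (auto intro!: derivative_eq_intros)
    have c: "((\<lambda>\<tau>. F (xs + \<tau> *\<^sub>R d)) has_derivative (\<lambda>h. F' (xs + \<tau> *\<^sub>R d) *v (h *\<^sub>R d))) (at \<tau>)"
      using has_derivative_compose[OF ld Fd] by (simp add: o_def)
    have c2: "((\<lambda>\<tau>. F (xs + \<tau> *\<^sub>R d) - \<tau> *\<^sub>R (F' x *v d)) has_derivative
        (\<lambda>h. F' (xs + \<tau> *\<^sub>R d) *v (h *\<^sub>R d) - h *\<^sub>R (F' x *v d))) (at \<tau>)"
      by (auto intro!: derivative_eq_intros c)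
    have c3: "(\<Phi> has_derivative (\<lambda>h. A0 *v (F' (xs + \<tau> *\<^sub>R d) *v (h *\<^sub>R d) - h *\<^sub>R (F' x *v d)))) (at \<tau>)"
      unfolding \<Phi>_def by (rule bounded_linear.has_derivative[OF matrix_vector_mul_bounded_linear c2])
    show ?thesis unfolding has_vector_derivative_def \<Phi>'_def
      using c3 by (simp add: matrix_vector_mult_scaleR matrix_vector_mult_diff_distrib scaleR_diff_right)
  qed
  have fder: "(f has_real_derivative df s) (at s)" if "0 < s" "s < R" for s
  proof -
    have "(f has_real_derivative df s) (at s within {0..<R})" using f_deriv that by simp
    moreover have "at s within {0..<R} = at s"
      by (rule at_within_interior) (use that in simp)
    ultimately show ?thesis by metis
  qed
  have tR': "t < R" using tR t_def by simp
  have tpos': "0 < t" using tpos t_def by simp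
  have psider: "(\<psi> has_vector_derivative \<psi>' \<tau>) (at \<tau>)" if "0 < \<tau>" "\<tau> < 1" for \<tau>
  proof -
    have "\<tau> * t \<le> t" using tt_le[OF tpos', of \<tau>] that by simp
    hence s: "0 < \<tau> * t" "\<tau> * t < R" using that tpos' tR' by (simp, linarith)
    have fd: "(f has_real_derivative df (\<tau> * t)) (at (\<tau> * t))" using fder[OF s] .
    have gd: "((\<lambda>\<tau>. \<tau> * t) has_real_derivative t) (at \<tau>)"
      by (auto intro!: derivative_eq_intros)
    have "((\<lambda>\<tau>. f (\<tau> * t)) has_real_derivative df (\<tau> * t) * t) (at \<tau>)"
      using DERIV_chain2[OF fd gd] .
    hence "(\<psi> has_real_derivative \<psi>' \<tau>) (at \<tau>)"
      unfolding \<psi>_def \<psi>'_def by (auto intro!: derivative_eq_intros)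
    thus ?thesis by (simp add: has_real_derivative_iff_has_vector_derivative)
  qed
  have fcont: "continuous_on {0..<R} f"
    by (rule DERIV_continuous_on) (use f_deriv in blast)
  have psicont: "continuous_on {0..1} \<psi>"
  proof -
    have "continuous_on {0..1} (\<lambda>\<tau>. f (\<tau> * t))"
    proof (rule continuous_on_compose2[OF fcont])
      show "continuous_on {0..1} (\<lambda>\<tau>. \<tau> * t)" by (intro continuous_intros)
      show "(\<lambda>\<tau>. \<tau> * t) ` {0..1} \<subseteq> {0..<R}"
      proof
        fix y assume "y \<in> (\<lambda>\<tau>. \<tau> * t) ` {0..1}"
        then obtain \<tau> where "\<tau> \<in> {0..1}" "y = \<tau> * t" by blast
        moreover have "\<tau> * t \<le> t" using tt_le[OF tpos', of \<tau>] \<open>\<tau> \<in> {0..1}\<close> by simp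
        hence "\<tau> * t < R" using tR' by linarith
        moreover have "0 \<le> \<tau> * t" using \<open>\<tau> \<in> {0..1}\<close> tpos' by simp
        ultimately show "y \<in> {0..<R}" by simp
      qed
    qed
    thus ?thesis unfolding \<psi>_def by (intro continuous_intros)
  qed
  have Phicont: "continuous_on {0..1} \<Phi>"
  proof (rule continuous_at_imp_continuous_on, rule ballI)
    fix \<tau>::real assume "\<tau> \<in> {0..1}"
    hence "(\<Phi> has_vector_derivative \<Phi>' \<tau>) (at \<tau>)" using Phider by simp
    thus "isCont \<Phi> \<tau>" by (rule has_vector_derivative_continuous)
  qed
  have bndPhi: "norm (\<Phi>' \<tau>) \<le> \<psi>' \<tau>" if "0 < \<tau>" "\<tau> < 1" for \<tau>
  proof -
    have "\<Phi>' \<tau> = - ((A0 ** (F' x - F' (xs + \<tau> *\<^sub>R d))) *v d)"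
      unfolding \<Phi>'_def
      by (simp add: matrix_vector_mul_assoc[symmetric] matrix_vector_mult_diff_rdistrib
          matrix_vector_mult_diff_distrib)
    hence "norm (\<Phi>' \<tau>) = norm ((A0 ** (F' x - F' (xs + \<tau> *\<^sub>R d))) *v d)"
      by (simp only: norm_minus_cancel)
    also have "\<dots> \<le> opnorm (A0 ** (F' x - F' (xs + \<tau> *\<^sub>R d))) * norm d" by (rule opnorm_mv)
    also have "\<dots> \<le> (df t - df (\<tau> * t)) * t"
    proof -
      have nd: "norm d = t" by (simp add: t_def d_def)
      have "opnorm (A0 ** (F' x - F' (xs + \<tau> *\<^sub>R d))) \<le> df t - df (\<tau> * t)"
        using majorant[rule_format, of \<tau> x] xb that unfolding A0_def t_def d_def by simp
      thus ?thesis unfolding nd by (rule mult_right_mono) (use tpos' in simp)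
    qed
    finally show ?thesis unfolding \<psi>'_def by (simp add: algebra_simps)
  qed
  have mvt: "norm (\<Phi> 1 - \<Phi> 0) \<le> \<psi> 1 - \<psi> 0"
    by (rule differentiable_bound_general[OF zero_less_one Phicont psicont])
       (use Phider psider bndPhi in auto)
  have "\<Phi> 1 - \<Phi> 0 = A0 *v (F x - F' x *v d)"
    unfolding \<Phi>_def d_def using F_xs by (simp add: matrix_vector_mult_diff_distrib)
  hence key: "norm (A0 *v (F x - F' x *v d)) \<le> t * df t - f t"
    using mvt unfolding \<psi>_def using h1 by simp
  have "matrix_inv (F' x) *v F x - d = matrix_inv (F' x) *v (F' xs *v (A0 *v (F x - F' x *v d)))"
    using A0r minv_mv[OF invx] by (simp add: matrix_vector_mult_diff_distrib)
  hence "norm (matrix_inv (F' x) *v F x - d) \<le> norm (A0 *v (F x - F' x *v d)) / (- df t)"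
    using bnd by simp
  also have "\<dots> \<le> (t * df t - f t) / (- df t)"
    by (rule divide_right_mono[OF key]) (use dft in simp)
  also have "\<dots> = f t / df t - t" using dft by (simp add: field_simps)
  finally show "norm (matrix_inv (F' x) *v F x - (x - xs))
       \<le> f (norm (x - xs)) / df (norm (x - xs)) - norm (x - xs)"
    unfolding t_def d_def .
qed




lemma kappa_ball:
  assumes "R > 0"
  shows "ball xs (kappa R \<Omega> xs) \<subseteq> \<Omega>"
proof
  fix y assume y: "y \<in> ball xs (kappa R \<Omega> xs)"
  define S where "S = {t. 0 \<le> t \<and> t < R \<and> ball xs t \<subseteq> \<Omega>}"
  have ne: "S \<noteq> {}" using assms unfolding S_def by (auto intro!: exI[of _ 0])
  have bdd: "bdd_above S" unfolding S_def by (auto intro!: bdd_aboveI[of _ R])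
  have "dist xs y < Sup S" using y unfolding kappa_def S_def by simp
  then obtain t where "t \<in> S" "dist xs y < t" using less_cSup_iff[OF ne bdd] by blast
  thus "y \<in> \<Omega>" unfolding S_def by auto
qed

lemma nu_props:
  assumes R: "R > 0" and df0: "df 0 = -1" and dfc: "continuous_on {0..<R} df"
    and h2: "strict_mono_on {0..<R} df"
  shows "0 < nu R df" "nu R df \<le> R"
    "\<And>t. 0 \<le> t \<Longrightarrow> t < nu R df \<Longrightarrow> df t < 0 \<and> t < R"
proof -
  define S where "S = {t. 0 \<le> t \<and> t < R \<and> df t < 0}"
  have ne: "S \<noteq> {}" using R df0 unfolding S_def by (auto intro!: exI[of _ 0])
  have bdd: "bdd_above S" unfolding S_def by (auto intro!: bdd_aboveI[of _ R])
  have "(df \<longlongrightarrow> df 0) (at 0 within {0..<R})"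
    using dfc R unfolding continuous_on_def by auto
  hence "eventually (\<lambda>t. df t < 0) (at 0 within {0..<R})"
    using df0 by (intro order_tendstoD(2)) auto
  then obtain d where d: "d > 0" "\<And>t. t \<in> {0..<R} \<Longrightarrow> t \<noteq> 0 \<Longrightarrow> dist t 0 < d \<Longrightarrow> df t < 0"
    unfolding eventually_at by blast
  define t1 where "t1 = min d R / 2"
  have t1: "0 < t1" "t1 < R" "t1 < d" using d R unfolding t1_def by auto
  have "t1 \<in> S" unfolding S_def using t1 d(2)[of t1] by auto
  hence "t1 \<le> Sup S" using bdd by (rule cSup_upper)
  thus "0 < nu R df" using t1 unfolding nu_def S_def by simp
  show "nu R df \<le> R" unfolding nu_def using ne unfolding S_def
    by (intro cSup_least) auto
  fix t assume t: "0 \<le> t" "t < nu R df"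
  then obtain t' where "t' \<in> S" "t < t'" using less_cSup_iff[OF ne bdd] unfolding nu_def S_def by blast
  hence "df t < df t'" "t' < R" "df t' < 0" using t h2 unfolding S_def
    by (auto simp: strict_mono_on_def)
  thus "df t < 0 \<and> t < R" using \<open>t < t'\<close> by auto
qed

lemma ratio_lim:
  assumes R: "R > 0" and h1: "f 0 = 0" "df 0 = -1" and dfc: "continuous_on {0..<R} df"
    and f_deriv: "\<forall>t\<in>{0..<R}. (f has_real_derivative df t) (at t within {0..<R})"
  shows "((\<lambda>t. f t / (t * df t) - 1) \<longlongrightarrow> 0) (at 0 within {0..<R})"
proof -
  have "(f has_real_derivative df 0) (at 0 within {0..<R})" using f_deriv R by auto
  hence a: "((\<lambda>y. f y / y) \<longlongrightarrow> -1) (at 0 within {0..<R})"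
    using h1 by (simp add: has_field_derivative_iff)
  have "(df \<longlongrightarrow> df 0) (at 0 within {0..<R})"
    using dfc R unfolding continuous_on_def by auto
  hence b: "(df \<longlongrightarrow> -1) (at 0 within {0..<R})" using h1 by simp
  have "((\<lambda>y. (f y / y) / df y - 1) \<longlongrightarrow> (-1) / (-1) - 1) (at 0 within {0..<R})"
    by (intro tendsto_intros a b) auto
  thus ?thesis by simp
qed

lemma rho_props:
  fixes f df :: "real \<Rightarrow> real"
  assumes R: "R > 0" and h1: "f 0 = 0" "df 0 = -1" and dfc: "continuous_on {0..<R} df"
    and f_deriv: "\<forall>t\<in>{0..<R}. (f has_real_derivative df t) (at t within {0..<R})"
    and h2: "strict_mono_on {0..<R} df"
    and K: "\<omega>1 * ((1 + vth) * lam + vth) + \<omega>2 < 1"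
  shows "0 < rho R f df \<omega>1 \<omega>2 vth lam" "rho R f df \<omega>1 \<omega>2 vth lam \<le> nu R df"
    "\<And>t. 0 < t \<Longrightarrow> t < rho R f df \<omega>1 \<omega>2 vth lam \<Longrightarrow>
        \<omega>1 * (1 + vth) * (1 + lam) * (f t / (t * df t) - 1)
        + \<omega>1 * ((1 + vth) * lam + vth) + \<omega>2 < 1"
proof -
  define Q where "Q = (\<lambda>t. \<omega>1 * (1 + vth) * (1 + lam) * (f t / (t * df t) - 1)
        + \<omega>1 * ((1 + vth) * lam + vth) + \<omega>2)"
  define S where "S = {\<delta>. 0 < \<delta> \<and> \<delta> < nu R df \<and> (\<forall>t. 0 < t \<and> t < \<delta> \<longrightarrow> Q t < 1)}"
  have rho_eq: "rho R f df \<omega>1 \<omega>2 vth lam = Sup S" unfolding rho_def S_def Q_def by simp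
  note nu = nu_props[OF R h1(2) dfc h2]
  have "(Q \<longlongrightarrow> \<omega>1 * (1 + vth) * (1 + lam) * 0 + \<omega>1 * ((1 + vth) * lam + vth) + \<omega>2) (at 0 within {0..<R})"
    unfolding Q_def by (intro tendsto_intros ratio_lim[OF R h1 dfc f_deriv])
  hence "eventually (\<lambda>t. Q t < 1) (at 0 within {0..<R})"
    using K by (intro order_tendstoD(2)) auto
  then obtain d where d: "d > 0" "\<And>t. t \<in> {0..<R} \<Longrightarrow> t \<noteq> 0 \<Longrightarrow> dist t 0 < d \<Longrightarrow> Q t < 1"
    unfolding eventually_at by blast
  define \<delta> where "\<delta> = min d (nu R df / 2)"
  have \<delta>: "0 < \<delta>" "\<delta> < nu R df" "\<delta> \<le> d" using d nu(1) unfolding \<delta>_def by auto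
  have "\<delta> \<in> S" unfolding S_def
  proof (intro CollectI conjI \<delta>(1,2) allI impI)
    fix t assume t: "0 < t \<and> t < \<delta>"
    show "Q t < 1" using t \<delta> nu(2) by (intro d(2)) auto
  qed
  hence ne: "S \<noteq> {}" by blast
  have bdd: "bdd_above S" unfolding S_def by (auto intro!: bdd_aboveI[of _ "nu R df"])
  have "\<delta> \<le> Sup S" using \<open>\<delta> \<in> S\<close> bdd by (rule cSup_upper)
  thus "0 < rho R f df \<omega>1 \<omega>2 vth lam" using \<delta> rho_eq by simp
  show "rho R f df \<omega>1 \<omega>2 vth lam \<le> nu R df" unfolding rho_eq using ne unfolding S_def
    by (intro cSup_least) auto
  fix t assume t: "0 < t" "t < rho R f df \<omega>1 \<omega>2 vth lam"
  then obtain s where "s \<in> S" "t < s" using less_cSup_iff[OF ne bdd] rho_eq by auto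
  thus "\<omega>1 * (1 + vth) * (1 + lam) * (f t / (t * df t) - 1)
        + \<omega>1 * ((1 + vth) * lam + vth) + \<omega>2 < 1" using t unfolding S_def Q_def by auto
qed




lemma one_step:
  fixes F :: "real^'n \<Rightarrow> real^'n" and F' :: "real^'n \<Rightarrow> real^'n^'n"
  assumes invx: "invertible (F' x)"
    and err: "norm (matrix_inv (F' x) *v F x - (x - xs)) \<le> N"
    and Minv: "invertible M" and neq: "M *v s = - F x + r" and yd: "y = x + s"
    and cg: "condG C y (\<theta> * (norm s)\<^sup>2) x x'"
    and b1: "opnorm (matrix_inv M ** F' x) \<le> \<omega>1"
    and b2: "opnorm (matrix_inv M ** F' x - mat 1) \<le> \<omega>2"
    and Pinv: "invertible P"
    and res: "norm (P *v r) \<le> \<eta> * norm (P *v F x)"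
    and forc: "\<eta> * cond (P ** F' x) \<le> vth"
    and Cc: "convex C" and xC: "x \<in> C" and xsC: "xs \<in> C"
    and th: "\<theta> \<ge> 0" and vth: "vth \<ge> 0"
  shows "x' \<in> C"
    "norm (x' - xs) \<le> \<omega>1 * (1 + vth) * (1 + sqrt (2 * \<theta>)) * N
        + (\<omega>1 * ((1 + vth) * sqrt (2 * \<theta>) + vth) + \<omega>2) * norm (x - xs)"
proof -
  define t where "t = norm (x - xs)"
  define d where "d = x - xs"
  define u where "u = matrix_inv (F' x) *v F x"
  define G where "G = matrix_inv M ** F' x"
  define c where "c = sqrt (2 * \<theta>)"
  have c0: "c \<ge> 0" using th c_def by simp
  have w1: "\<omega>1 \<ge> 0" using b1 opnorm_nonneg[of "matrix_inv M ** F' x"] by linarith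
  have ud: "norm (u - d) \<le> N" using err unfolding u_def d_def .
  have un: "norm u \<le> N + t"
  proof -
    have "norm u \<le> norm (u - d) + norm d" using norm_triangle_ineq[of "u - d" d] by simp
    thus ?thesis using ud unfolding t_def d_def by simp
  qed
  have Fu: "F' x *v u = F x" unfolding u_def using minv_mv[OF invx] by simp
  have Gv: "norm (G *v v) \<le> \<omega>1 * norm v" for v
    using opnorm_mv[of G v] mult_right_mono[OF b1 norm_ge_zero[of v]] unfolding G_def by linarith
  have invPF: "invertible (P ** F' x)" using invertible_mult[OF Pinv invx] .
  have Fr: "matrix_inv (F' x) *v r = matrix_inv (P ** F' x) *v (P *v r)"
    using minv_mult[OF Pinv invx] minv_mv[OF Pinv] by (simp add: matrix_vector_mul_assoc[symmetric])
  have PF: "P *v F x = (P ** F' x) *v u" using Fu by (simp add: matrix_vector_mul_assoc[symmetric])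
  have rbound: "norm (matrix_inv (F' x) *v r) \<le> vth * norm u"
  proof (cases "\<eta> \<ge> 0")
    case True
    have "norm (matrix_inv (F' x) *v r) \<le> opnorm (matrix_inv (P ** F' x)) * norm (P *v r)"
      unfolding Fr by (rule opnorm_mv)
    also have "\<dots> \<le> opnorm (matrix_inv (P ** F' x)) * (\<eta> * norm (P *v F x))"
      by (rule mult_left_mono[OF res opnorm_nonneg])
    also have "\<dots> \<le> opnorm (matrix_inv (P ** F' x)) * (\<eta> * (opnorm (P ** F' x) * norm u))"
      unfolding PF using True opnorm_nonneg opnorm_mv
      by (intro mult_left_mono) auto
    also have "\<dots> = (\<eta> * cond (P ** F' x)) * norm u" unfolding cond_def by simp
    also have "\<dots> \<le> vth * norm u" by (rule mult_right_mono[OF forc norm_ge_zero])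
    finally show ?thesis .
  next
    case False
    hence "\<eta> * norm (P *v F x) \<le> 0" by (simp add: mult_nonpos_nonneg)
    hence "norm (P *v r) \<le> 0" using res by linarith
    hence "P *v r = 0" by simp
    hence "r = 0" using minv_mv(2)[OF Pinv, of r] by simp
    thus ?thesis using vth by simp
  qed
  have Mr: "matrix_inv M *v r = G *v (matrix_inv (F' x) *v r)"
    unfolding G_def using minv_mv[OF invx] by (simp add: matrix_vector_mul_assoc[symmetric])
  have Mrb: "norm (matrix_inv M *v r) \<le> \<omega>1 * (vth * norm u)"
    unfolding Mr using Gv[of "matrix_inv (F' x) *v r"] mult_left_mono[OF rbound w1] by linarith
  have sM: "s = - (G *v u) + matrix_inv M *v r"
  proof -
    have "s = matrix_inv M *v (M *v s)" using minv_mv[OF Minv] by simp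
    also have "\<dots> = - (matrix_inv M *v F x) + matrix_inv M *v r"
      unfolding neq by (simp add: matrix_vector_right_distrib matrix_vector_mult_diff_distrib)
    also have "matrix_inv M *v F x = G *v u" unfolding G_def Fu[symmetric]
      by (simp add: matrix_vector_mul_assoc)
    finally show ?thesis .
  qed
  have sb: "norm s \<le> \<omega>1 * (1 + vth) * (N + t)"
  proof -
    have "norm s \<le> norm (G *v u) + norm (matrix_inv M *v r)"
      unfolding sM using norm_triangle_ineq[of "- (G *v u)" "matrix_inv M *v r"] by simp
    also have "\<dots> \<le> \<omega>1 * norm u + \<omega>1 * (vth * norm u)" using Gv[of u] Mrb by linarith
    also have "\<dots> = \<omega>1 * (1 + vth) * norm u" by (simp add: algebra_simps)
    also have "\<dots> \<le> \<omega>1 * (1 + vth) * (N + t)"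
      using un w1 vth by (intro mult_left_mono) auto
    finally show ?thesis .
  qed
  have yx: "y - xs = (d - G *v d) + G *v (d - u) + matrix_inv M *v r"
    unfolding yd sM d_def by (simp add: matrix_vector_mult_diff_distrib algebra_simps)
  have Gd: "norm (d - G *v d) \<le> \<omega>2 * t"
  proof -
    have "d - G *v d = - ((G - mat 1) *v d)" by (simp add: matrix_vector_mult_diff_rdistrib)
    hence "norm (d - G *v d) = norm ((G - mat 1) *v d)" by simp
    also have "\<dots> \<le> opnorm (G - mat 1) * norm d" by (rule opnorm_mv)
    also have "\<dots> \<le> \<omega>2 * t" unfolding t_def d_def G_def
      by (rule mult_right_mono[OF b2 norm_ge_zero])
    finally show ?thesis .
  qed
  have yb: "norm (y - xs) \<le> \<omega>2 * t + \<omega>1 * N + \<omega>1 * (vth * (N + t))"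
  proof -
    have a: "norm (y - xs) \<le> norm (d - G *v d) + norm (G *v (d - u)) + norm (matrix_inv M *v r)"
      unfolding yx using norm_triangle_ineq[of "(d - G *v d) + G *v (d - u)" "matrix_inv M *v r"]
        norm_triangle_ineq[of "d - G *v d" "G *v (d - u)"] by linarith
    have "\<omega>1 * norm (d - u) \<le> \<omega>1 * N" using ud w1 by (simp add: norm_minus_commute mult_left_mono)
    hence b: "norm (G *v (d - u)) \<le> \<omega>1 * N" using Gv[of "d - u"] by linarith
    have "vth * norm u \<le> vth * (N + t)" using un vth by (rule mult_left_mono)
    hence c: "\<omega>1 * (vth * norm u) \<le> \<omega>1 * (vth * (N + t))" using w1 by (rule mult_left_mono)
    show ?thesis using a b c Gd Mrb by linarith
  qed
  have cgp: "x' \<in> C \<and> (\<forall>v\<in>C. inner (x' - y) (v - x') \<ge> - (\<theta> * (norm s)\<^sup>2))"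
    using condG_prop[OF cg Cc xC] th by simp
  thus "x' \<in> C" by simp
  have "norm (x' - xs) \<le> norm (y - xs) + sqrt (2 * (\<theta> * (norm s)\<^sup>2))"
    using condG_dist[where C=C and z'=x' and y=y and \<epsilon>="\<theta> * (norm s)\<^sup>2" and xt=xs] cgp xsC th by simp
  also have "sqrt (2 * (\<theta> * (norm s)\<^sup>2)) = c * norm s"
    unfolding c_def by (simp add: real_sqrt_mult)
  finally have "norm (x' - xs) \<le> norm (y - xs) + c * norm s" .
  also have "\<dots> \<le> (\<omega>2 * t + \<omega>1 * N + \<omega>1 * (vth * (N + t))) + c * (\<omega>1 * (1 + vth) * (N + t))"
    using yb sb c0 by (intro add_mono mult_left_mono) auto
  also have "\<dots> = \<omega>1 * (1 + vth) * (1 + c) * N + (\<omega>1 * ((1 + vth) * c + vth) + \<omega>2) * t"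
    by (simp add: algebra_simps)
  finally show "norm (x' - xs) \<le> \<omega>1 * (1 + vth) * (1 + sqrt (2 * \<theta>)) * N
        + (\<omega>1 * ((1 + vth) * sqrt (2 * \<theta>) + vth) + \<omega>2) * norm (x - xs)"
    unfolding c_def t_def .
qed




lemma seq_to_zero:
  fixes t :: "nat \<Rightarrow> real" and Q :: "real \<Rightarrow> real"
  assumes pos: "\<forall>k. 0 < t k" and bnd: "\<forall>k. t (Suc k) \<le> t k * Q (t k)"
    and dec: "\<forall>k. t (Suc k) < t k"
    and Qp: "\<And>s. 0 < s \<Longrightarrow> s \<le> t 0 \<Longrightarrow> Q s < 1 \<and> isCont Q s"
  shows "t \<longlonglongrightarrow> 0"
proof -
  have "decseq t" using dec by (intro decseq_SucI) (simp add: less_imp_le)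
  then obtain L where L: "t \<longlonglongrightarrow> L" "\<forall>i. L \<le> t i"
    using decseq_convergent[of t 0] pos by (metis less_imp_le)
  have L0: "0 \<le> L" using L pos by (intro LIMSEQ_le_const[OF L(1)]) (auto simp: less_imp_le)
  have "L = 0"
  proof (rule ccontr)
    assume "L \<noteq> 0"
    hence Lp: "0 < L" using L0 by simp
    have "L \<le> t 0" using L by simp
    with Qp[OF Lp] have QL: "Q L < 1" "isCont Q L" by auto
    have "(\<lambda>k. t k * Q (t k)) \<longlonglongrightarrow> L * Q L"
      by (intro tendsto_intros L(1) isCont_tendsto_compose[OF QL(2) L(1)])
    moreover have "(\<lambda>k. t (Suc k)) \<longlonglongrightarrow> L" using LIMSEQ_Suc[OF L(1)] .
    ultimately have "L \<le> L * Q L" using bnd by (intro LIMSEQ_le[of "\<lambda>k. t (Suc k)" L]) auto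
    moreover have "L * Q L < L" using Lp QL(1) by simp
    ultimately show False by simp
  qed
  thus ?thesis using L by simp
qed

lemma limsup_bound:
  fixes r a \<theta> :: "nat \<Rightarrow> real"
  assumes a0: "a \<longlonglongrightarrow> 0" and th: "\<forall>k. 0 \<le> \<theta> k \<and> \<theta> k \<le> U"
    and M1: "M1 \<ge> 0" and M2: "M2 > 0"
    and rb: "\<forall>k. r k \<le> M1 * a k + (M2 * sqrt (2 * \<theta> k) + D)"
  shows "limsup (\<lambda>k. ereal (r k))
    \<le> ereal (M2 * sqrt (2 * real_of_ereal (limsup (\<lambda>k. ereal (\<theta> k)))) + D)"
proof -
  define T where "T = limsup (\<lambda>k. ereal (\<theta> k))"
  have T1: "T \<le> ereal U" unfolding T_def using th by (intro Limsup_bounded) auto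
  have T0: "0 \<le> T" unfolding T_def using th by (intro le_Limsup) auto
  define tt where "tt = real_of_ereal T"
  have Teq: "T = ereal tt" unfolding tt_def using T0 T1 by (cases T) auto
  have tt0: "0 \<le> tt" using T0 Teq by simp
  define s where "s = sqrt (2 * tt)"
  have s0: "0 \<le> s" unfolding s_def using tt0 by simp
  have ss: "s\<^sup>2 = 2 * tt" unfolding s_def using tt0 by simp
  show ?thesis unfolding T_def[symmetric] tt_def[symmetric] s_def[symmetric]
  proof (rule ereal_le_epsilon2)
    fix e :: real assume e: "0 < e"
    define \<delta> where "\<delta> = e / (2 * M2)"
    have \<delta>: "0 < \<delta>" "M2 * \<delta> = e / 2" unfolding \<delta>_def using e M2 by auto
    have "2 * tt < (s + \<delta>)\<^sup>2"
      using ss s0 \<delta>(1) by (simp add: power2_sum) (smt (verit) mult_nonneg_nonneg zero_less_power2)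
    hence "T < ereal ((s + \<delta>)\<^sup>2 / 2)" unfolding Teq by simp
    hence ev1: "eventually (\<lambda>k. ereal (\<theta> k) < ereal ((s + \<delta>)\<^sup>2 / 2)) sequentially"
      unfolding T_def by (rule Limsup_lessD)
    have "(\<lambda>k. M1 * a k) \<longlonglongrightarrow> M1 * 0" by (intro tendsto_intros a0)
    hence ev2: "eventually (\<lambda>k. M1 * a k < e / 2) sequentially"
      using e by (intro order_tendstoD(2)) auto
    have "eventually (\<lambda>k. ereal (r k) \<le> ereal (M2 * s + D) + ereal e) sequentially"
      using ev1 ev2
    proof eventually_elim
      case (elim k)
      have "2 * \<theta> k < (s + \<delta>)\<^sup>2" using elim(1) by simp
      hence "sqrt (2 * \<theta> k) < sqrt ((s + \<delta>)\<^sup>2)" by (rule real_sqrt_less_mono)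
      also have "\<dots> = s + \<delta>" using s0 \<delta>(1) by simp
      finally have "M2 * sqrt (2 * \<theta> k) \<le> M2 * (s + \<delta>)" using M2 by simp
      moreover have "M2 * (s + \<delta>) = M2 * s + e / 2" using \<delta>(2) by (simp add: distrib_left)
      moreover have "r k \<le> M1 * a k + (M2 * sqrt (2 * \<theta> k) + D)" using rb by blast
      ultimately have "r k \<le> M2 * s + D + e" using elim(2) by linarith
      thus ?case by simp
    qed
    thus "limsup (\<lambda>k. ereal (r k)) \<le> ereal (M2 * s + D) + ereal e"
      by (rule Limsup_bounded)
  qed
qed


theorem theorem1:
  fixes \<Omega> C :: "(real^'n) set"
    and F :: "real^'n \<Rightarrow> real^'n"
    and F' :: "real^'n \<Rightarrow> real^'n^'n"
    and xs :: "real^'n"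
    and R :: real and f df :: "real \<Rightarrow> real"
    and vth \<omega>1 \<omega>2 lam :: real
    and x y s r :: "nat \<Rightarrow> real^'n"
    and M P :: "nat \<Rightarrow> real^'n^'n"
    and \<theta> \<eta> :: "nat \<Rightarrow> real"
  assumes \<Omega>_open: "open \<Omega>"
    and F_deriv: "\<forall>z\<in>\<Omega>. (F has_derivative (\<lambda>h. F' z *v h)) (at z)"
    and F'_cont: "continuous_on \<Omega> F'"
    and C_sub: "C \<subseteq> \<Omega>" and C_convex: "convex C" and C_compact: "compact C"
    and C_ne: "C \<noteq> {}"
    and xs_C: "xs \<in> C" and F_xs: "F xs = 0" and F'_xs_inv: "invertible (F' xs)"
    and R_pos: "R > 0"
    and f_deriv: "\<forall>t\<in>{0..<R}. (f has_real_derivative df t) (at t within {0..<R})"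
    and df_cont: "continuous_on {0..<R} df"
    and majorant: "\<forall>\<tau>\<in>{0..1}. \<forall>z\<in>ball xs (kappa R \<Omega> xs).
        opnorm (matrix_inv (F' xs) ** (F' z - F' (xs + \<tau> *\<^sub>R (z - xs))))
          \<le> df (norm (z - xs)) - df (\<tau> * norm (z - xs))"
    and h1: "f 0 = 0" "df 0 = -1"
    and h2: "strict_mono_on {0..<R} df"
    and vth_bounds: "0 \<le> vth" "vth < 1"
    and \<omega>_bounds: "0 \<le> \<omega>2" "\<omega>2 < \<omega>1" "\<omega>1 * vth + \<omega>2 < 1"
    and lam_bounds: "0 \<le> lam" "lam < (1 - \<omega>2 - \<omega>1 * vth) / (\<omega>1 * (1 + vth))"
    and x0: "x 0 \<in> C" "x 0 \<in> ball xs (min (kappa R \<Omega> xs) (rho R f df \<omega>1 \<omega>2 vth lam))"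
      "x 0 \<noteq> xs"
    and \<theta>_bounds: "\<forall>k. 0 \<le> \<theta> k \<and> \<theta> k \<le> lam\<^sup>2 / 2"
    and no_stop: "\<forall>k. F (x k) \<noteq> 0"
    and M_inv: "\<forall>k. invertible (M k)"
    and newton_eq: "\<forall>k. M k *v s k = - F (x k) + r k"
    and y_def: "\<forall>k. y k = x k + s k"
    and x_next: "\<forall>k. condG C (y k) (\<theta> k * (norm (s k))\<^sup>2) (x k) (x (Suc k))"
    and M_bound1: "\<forall>k. opnorm (matrix_inv (M k) ** F' (x k)) \<le> \<omega>1"
    and M_bound2: "\<forall>k. opnorm (matrix_inv (M k) ** F' (x k) - mat 1) \<le> \<omega>2"
    and P_inv: "\<forall>k. invertible (P k)"
    and residual: "\<forall>k. norm (P k *v r k) \<le> \<eta> k * norm (P k *v F (x k))"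
    and forcing: "\<forall>k. 0 \<le> \<eta> k * cond (P k ** F' (x k)) \<and> \<eta> k * cond (P k ** F' (x k)) \<le> vth"
  shows "(\<forall>k. x k \<in> ball xs (min (kappa R \<Omega> xs) (rho R f df \<omega>1 \<omega>2 vth lam)) \<inter> C)
    \<and> x \<longlonglongrightarrow> xs
    \<and> (\<forall>k. norm (x (Suc k) - xs) < norm (x k - xs))
    \<and> limsup (\<lambda>k. ereal (norm (x (Suc k) - xs) / norm (x k - xs)))
        \<le> ereal (\<omega>1 * ((1 + vth) * sqrt (2 * real_of_ereal (limsup (\<lambda>k. ereal (\<theta> k)))) + vth) + \<omega>2)
    \<and> (\<forall>p::real. 0 < p \<and> p \<le> 1 \<longrightarrow>
        strict_mono_on {0<..<nu R df} (\<lambda>t. (f t / df t - t) / t powr (p + 1)) \<longrightarrow>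
        (\<forall>k. norm (x (Suc k) - xs)
          \<le> \<omega>1 * (1 + vth) * (1 + lam)
              * (f (norm (x 0 - xs)) / df (norm (x 0 - xs)) - norm (x 0 - xs))
              * (norm (x k - xs) / norm (x 0 - xs)) powr (p + 1)
            + (\<omega>1 * ((1 + vth) * lam + vth) + \<omega>2) * norm (x k - xs)))"
  proof -
  define t where "t = (\<lambda>k. norm (x k - xs))"
  define N where "N = (\<lambda>s. f s / df s - s)"
  define K0 where "K0 = \<omega>1 * ((1 + vth) * lam + vth) + \<omega>2"
  define M1 where "M1 = \<omega>1 * (1 + vth) * (1 + lam)"
  define a where "a = (\<lambda>k. f (t k) / (t k * df (t k)) - 1)"
  have w1: "0 < \<omega>1" using \<omega>_bounds by linarith
  have M2p: "0 < \<omega>1 * (1 + vth)" using w1 vth_bounds by simp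
  have M1p: "0 \<le> M1" unfolding M1_def using w1 vth_bounds lam_bounds by simp
  have "lam * (\<omega>1 * (1 + vth)) < 1 - \<omega>2 - \<omega>1 * vth"
    using lam_bounds(2) M2p by (simp add: pos_less_divide_eq)
  hence K0lt: "\<omega>1 * ((1 + vth) * lam + vth) + \<omega>2 < 1" by (simp add: algebra_simps)
  have ballK: "ball xs (kappa R \<Omega> xs) \<subseteq> \<Omega>" using kappa_ball[OF R_pos] .
  note nuP = nu_props[OF R_pos h1(2) df_cont h2]
  note rhoP = rho_props[OF R_pos h1 df_cont f_deriv h2 K0lt]
  have cl: "sqrt (2 * \<theta> k) \<le> lam" for k
  proof -
    have "2 * \<theta> k \<le> lam\<^sup>2" using \<theta>_bounds by (auto simp: field_simps)
    hence "sqrt (2 * \<theta> k) \<le> sqrt (lam\<^sup>2)" by (rule real_sqrt_le_mono)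
    thus ?thesis using lam_bounds by simp
  qed
  have c0: "0 \<le> sqrt (2 * \<theta> k)" for k using \<theta>_bounds by simp
  have tpos: "0 < t k" for k
  proof -
    have "x k \<noteq> xs" using no_stop F_xs by metis
    thus ?thesis unfolding t_def by simp
  qed
  have fder: "(f has_real_derivative df s) (at s)" if "0 < s" "s < R" for s
  proof -
    have "(f has_real_derivative df s) (at s within {0..<R})" using f_deriv that by simp
    moreover have "at s within {0..<R} = at s"
      by (rule at_within_interior) (use that in simp)
    ultimately show ?thesis by metis
  qed
  have step: "x (Suc k) \<in> C \<and> 0 \<le> a k
      \<and> t (Suc k) / t k \<le> \<omega>1 * (1 + vth) * (1 + sqrt (2 * \<theta> k)) * a k
           + (\<omega>1 * ((1 + vth) * sqrt (2 * \<theta> k) + vth) + \<omega>2)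
      \<and> t (Suc k) \<le> M1 * N (t k) + K0 * t k
      \<and> t (Suc k) \<le> t k * (M1 * a k + K0)
      \<and> t (Suc k) < t k"
    if xk: "x k \<in> C" and tk: "t k < min (kappa R \<Omega> xs) (rho R f df \<omega>1 \<omega>2 vth lam)" for k
  proof -
    have tK: "norm (x k - xs) < kappa R \<Omega> xs" using tk unfolding t_def by simp
    have tr: "t k < rho R f df \<omega>1 \<omega>2 vth lam" using tk by simp
    have tnu: "t k < nu R df" using tr rhoP(2) by linarith
    have dfR: "df (t k) < 0 \<and> t k < R" using nuP(3)[of "t k"] tnu tpos[of k] by simp
    have tpk: "0 < norm (x k - xs)" "df (norm (x k - xs)) < 0" "norm (x k - xs) < R"
      using tpos[of k] dfR unfolding t_def by auto
    note NE = newton_err[OF F_deriv ballK majorant F_xs F'_xs_inv f_deriv h1 h2 tK tpk]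
    have NE3: "norm (matrix_inv (F' (x k)) *v F (x k) - (x k - xs)) \<le> N (t k)"
      using NE(3) unfolding N_def t_def .
    have N0: "0 \<le> N (t k)" using NE3 norm_ge_zero order_trans by blast
    have tk0: "t k \<noteq> 0" "df (t k) \<noteq> 0" using tpos[of k] dfR by auto
    have aN: "a k * t k = N (t k)" unfolding a_def N_def using tk0 by (simp add: field_simps)
    have a0: "0 \<le> a k" using aN N0 tpos[of k] by (metis zero_le_mult_iff not_less)
    note OS = one_step[where F=F and F'=F' and x="x k" and xs=xs and M="M k" and s="s k"
        and r="r k" and y="y k" and C=C and \<theta>="\<theta> k" and x'="x (Suc k)" and P="P k"
        and \<eta>="\<eta> k" and vth=vth and N="N (t k)",
        OF NE(1) NE3 M_inv[rule_format] newton_eq[rule_format] y_def[rule_format]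
        x_next[rule_format] M_bound1[rule_format] M_bound2[rule_format] P_inv[rule_format]
        residual[rule_format] conjunct2[OF forcing[rule_format]] C_convex xk xs_C
        conjunct1[OF \<theta>_bounds[rule_format]] vth_bounds(1)]
    define c where "c = sqrt (2 * \<theta> k)"
    have cc: "0 \<le> c" "c \<le> lam" unfolding c_def using cl c0 by auto
    have b1: "t (Suc k) \<le> \<omega>1 * (1 + vth) * (1 + c) * N (t k)
        + (\<omega>1 * ((1 + vth) * c + vth) + \<omega>2) * t k"
      using OS(2) unfolding c_def t_def .
    have "\<omega>1 * (1 + vth) * (1 + c) * N (t k) + (\<omega>1 * ((1 + vth) * c + vth) + \<omega>2) * t k
        + (\<omega>1 * (1 + vth)) * ((lam - c) * (N (t k) + t k))
        = M1 * N (t k) + K0 * t k" unfolding M1_def K0_def by (simp add: algebra_simps)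
    moreover have "0 \<le> (\<omega>1 * (1 + vth)) * ((lam - c) * (N (t k) + t k))"
      using M2p cc N0 tpos[of k] by simp
    ultimately have b2: "t (Suc k) \<le> M1 * N (t k) + K0 * t k" using b1 by linarith
    have b3: "M1 * N (t k) + K0 * t k = t k * (M1 * a k + K0)"
      using aN by (simp add: algebra_simps)
    have "M1 * a k + K0 < 1"
      using rhoP(3)[OF tpos[of k] tr] unfolding a_def M1_def K0_def by simp
    hence "t k * (M1 * a k + K0) < t k" using tpos[of k] by simp
    hence lt: "t (Suc k) < t k" using b2 b3 by linarith
    have "t (Suc k) / t k \<le> (\<omega>1 * (1 + vth) * (1 + c) * N (t k)
        + (\<omega>1 * ((1 + vth) * c + vth) + \<omega>2) * t k) / t k"
      using b1 tpos[of k] by (simp add: divide_right_mono)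
    also have "\<dots> = \<omega>1 * (1 + vth) * (1 + c) * a k + (\<omega>1 * ((1 + vth) * c + vth) + \<omega>2)"
      using aN[symmetric] tk0 by (simp add: field_simps)
    finally have b4: "t (Suc k) / t k \<le> \<omega>1 * (1 + vth) * (1 + c) * a k
        + (\<omega>1 * ((1 + vth) * c + vth) + \<omega>2)" .
    show ?thesis using OS(1) a0 b4 b2 b3 lt unfolding c_def by simp
  qed
  have inv: "x k \<in> C \<and> t k < min (kappa R \<Omega> xs) (rho R f df \<omega>1 \<omega>2 vth lam)" for k
  proof (induction k)
    case 0
    then show ?case using x0 unfolding t_def by (simp add: dist_norm norm_minus_commute)
  next
    case (Suc k)
    then show ?case using step[of k] by auto
  qed
  have st: "x (Suc k) \<in> C \<and> 0 \<le> a k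
      \<and> t (Suc k) / t k \<le> \<omega>1 * (1 + vth) * (1 + sqrt (2 * \<theta> k)) * a k
           + (\<omega>1 * ((1 + vth) * sqrt (2 * \<theta> k) + vth) + \<omega>2)
      \<and> t (Suc k) \<le> M1 * N (t k) + K0 * t k
      \<and> t (Suc k) \<le> t k * (M1 * a k + K0)
      \<and> t (Suc k) < t k" for k
    using step inv by blast
  have tle0: "t k \<le> t 0" for k
  proof (induction k)
    case (Suc k) thus ?case using st[of k] by linarith
  qed simp
  have t0s: "t 0 < rho R f df \<omega>1 \<omega>2 vth lam" using inv[of 0] by simp
  have c1: "\<forall>k. x k \<in> ball xs (min (kappa R \<Omega> xs) (rho R f df \<omega>1 \<omega>2 vth lam)) \<inter> C"
    using inv unfolding t_def by (simp add: dist_norm norm_minus_commute)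
  have tlim: "t \<longlonglongrightarrow> 0"
  proof (rule seq_to_zero[where Q="\<lambda>s. M1 * (f s / (s * df s) - 1) + K0"])
    show "\<forall>k. 0 < t k" using tpos by blast
    show "\<forall>k. t (Suc k) \<le> t k * (M1 * (f (t k) / (t k * df (t k)) - 1) + K0)"
      using st unfolding a_def by blast
    show "\<forall>k. t (Suc k) < t k" using st by blast
    fix s assume s: "0 < s" "s \<le> t 0"
    have sr: "s < rho R f df \<omega>1 \<omega>2 vth lam" using s t0s by linarith
    have snu: "s < nu R df" using sr rhoP(2) by linarith
    have dfR: "df s < 0 \<and> s < R" using nuP(3)[of s] snu s by simp
    show "M1 * (f s / (s * df s) - 1) + K0 < 1 \<and> isCont (\<lambda>s. M1 * (f s / (s * df s) - 1) + K0) s"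
    proof
      show "M1 * (f s / (s * df s) - 1) + K0 < 1"
        using rhoP(3)[OF s(1) sr] unfolding M1_def K0_def by simp
      have cf: "isCont f s" using fder[of s] s dfR by (intro DERIV_isCont) auto
      have cdf: "isCont df s"
        using continuous_on_interior[OF df_cont, of s] s dfR by simp
      show "isCont (\<lambda>s. M1 * (f s / (s * df s) - 1) + K0) s"
        using cf cdf s dfR by (intro continuous_intros) auto
    qed
  qed
  have c2: "x \<longlonglongrightarrow> xs"
  proof -
    have "(\<lambda>k. x k - xs) \<longlonglongrightarrow> 0" using tlim unfolding t_def tendsto_norm_zero_iff .
    thus ?thesis by (simp add: LIM_zero_iff)
  qed
  have c3: "\<forall>k. norm (x (Suc k) - xs) < norm (x k - xs)" using st unfolding t_def by blast
  have alim: "a \<longlonglongrightarrow> 0"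
  proof -
    have "filterlim t (at 0 within {0..<R}) sequentially"
      unfolding filterlim_at
    proof
      show "eventually (\<lambda>k. t k \<in> {0..<R} \<and> t k \<noteq> 0) sequentially"
      proof (rule always_eventually, rule allI)
        fix k
        have "t k < nu R df" using inv[of k] rhoP(2) by simp
        hence "t k < R" using nuP(2) by linarith
        thus "t k \<in> {0..<R} \<and> t k \<noteq> 0" using tpos[of k] by simp
      qed
      show "t \<longlonglongrightarrow> 0" by (rule tlim)
    qed
    from filterlim_compose[OF ratio_lim[OF R_pos h1 df_cont f_deriv] this]
    show ?thesis unfolding a_def .
  qed
  have c4: "limsup (\<lambda>k. ereal (norm (x (Suc k) - xs) / norm (x k - xs)))
        \<le> ereal (\<omega>1 * ((1 + vth) * sqrt (2 * real_of_ereal (limsup (\<lambda>k. ereal (\<theta> k)))) + vth) + \<omega>2)"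
  proof -
    have rb: "\<forall>k. t (Suc k) / t k \<le> M1 * a k + (\<omega>1 * (1 + vth) * sqrt (2 * \<theta> k) + (\<omega>1 * vth + \<omega>2))"
    proof
      fix k
      have "\<omega>1 * (1 + vth) * (1 + sqrt (2 * \<theta> k)) * a k \<le> M1 * a k"
        unfolding M1_def using cl[of k] M2p st[of k]
        by (intro mult_right_mono mult_left_mono) auto
      thus "t (Suc k) / t k \<le> M1 * a k + (\<omega>1 * (1 + vth) * sqrt (2 * \<theta> k) + (\<omega>1 * vth + \<omega>2))"
        using st[of k] by (simp add: algebra_simps)
    qed
    have "limsup (\<lambda>k. ereal (t (Suc k) / t k))
        \<le> ereal (\<omega>1 * (1 + vth) * sqrt (2 * real_of_ereal (limsup (\<lambda>k. ereal (\<theta> k)))) + (\<omega>1 * vth + \<omega>2))"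
      by (rule limsup_bound[OF alim _ M1p M2p rb]) (use \<theta>_bounds in blast)
    also have "\<omega>1 * (1 + vth) * sqrt (2 * real_of_ereal (limsup (\<lambda>k. ereal (\<theta> k)))) + (\<omega>1 * vth + \<omega>2)
       = \<omega>1 * ((1 + vth) * sqrt (2 * real_of_ereal (limsup (\<lambda>k. ereal (\<theta> k)))) + vth) + \<omega>2"
      by (simp add: algebra_simps)
    finally show ?thesis unfolding t_def .
  qed
  have c5: "\<forall>p::real. 0 < p \<and> p \<le> 1 \<longrightarrow>
        strict_mono_on {0<..<nu R df} (\<lambda>t. (f t / df t - t) / t powr (p + 1)) \<longrightarrow>
        (\<forall>k. norm (x (Suc k) - xs)
          \<le> \<omega>1 * (1 + vth) * (1 + lam)
              * (f (norm (x 0 - xs)) / df (norm (x 0 - xs)) - norm (x 0 - xs))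
              * (norm (x k - xs) / norm (x 0 - xs)) powr (p + 1)
            + (\<omega>1 * ((1 + vth) * lam + vth) + \<omega>2) * norm (x k - xs))"
  proof (intro allI impI)
    fix p :: real and k assume p: "0 < p \<and> p \<le> 1"
      and sm: "strict_mono_on {0<..<nu R df} (\<lambda>t. (f t / df t - t) / t powr (p + 1))"
    define g where "g = (\<lambda>t. (f t / df t - t) / t powr (p + 1))"
    have tnu: "t j \<in> {0<..<nu R df}" for j using inv[of j] rhoP(2) tpos[of j] by simp
    have "g (t k) \<le> g (t 0)"
      using strict_mono_on_leD[OF sm tnu[of k] tnu[of 0] tle0[of k]] unfolding g_def .
    hence "g (t k) * t k powr (p + 1) \<le> g (t 0) * t k powr (p + 1)"
      by (rule mult_right_mono) simp
    moreover have "g (t k) * t k powr (p + 1) = N (t k)"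
      unfolding g_def N_def using tpos[of k] by simp
    moreover have "g (t 0) * t k powr (p + 1) = N (t 0) * (t k / t 0) powr (p + 1)"
      unfolding g_def N_def using tpos[of k] tpos[of 0] by (simp add: powr_divide)
    ultimately have "N (t k) \<le> N (t 0) * (t k / t 0) powr (p + 1)" by simp
    hence "M1 * N (t k) \<le> M1 * (N (t 0) * (t k / t 0) powr (p + 1))"
      by (rule mult_left_mono[OF _ M1p])
    hence "t (Suc k) \<le> M1 * N (t 0) * (t k / t 0) powr (p + 1) + K0 * t k"
      using st[of k] by (simp add: mult.assoc)
    thus "norm (x (Suc k) - xs)
          \<le> \<omega>1 * (1 + vth) * (1 + lam)
              * (f (norm (x 0 - xs)) / df (norm (x 0 - xs)) - norm (x 0 - xs))
              * (norm (x k - xs) / norm (x 0 - xs)) powr (p + 1)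
            + (\<omega>1 * ((1 + vth) * lam + vth) + \<omega>2) * norm (x k - xs)"
      unfolding t_def M1_def N_def K0_def .
  qed
  show ?thesis using c1 c2 c3 c4 c5 by blast
qed

end
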